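(* There exists a smallest (for inclusion) shell-complete category of cubes.
   Context: $[0]=\{()\}$, $[n]=\{0,1\}^n$ ($n\ge1$) with the product order; ${\rm PoSet}$ is posets with strictly increasing maps. Face maps $\delta_i^\alpha:[n-1]\to[n]$ insert $\alpha\in\{0,1\}$ at position $i$; $\square$ is the subcategory of ${\rm PoSet}$ with objects $[n]$ generated by face maps. A map $[m]\to[n]$ is adjacency-preserving if strictly increasing and sends pairs at Hamming distance $1$ to pairs at Hamming distance $1$. A category of cubes is a subcategory $\mathcal A\subset{\rm PoSet}$ with objects $\{[n]:n\ge0\}$, containing $\square$, whose morphisms are adjacency-preserving. An $\mathcal A$-set is a presheaf on $\mathcal A$, $\mathcal A[p]=\mathcal A(-,[p])$, and $\mathrm{cosk}_1^{\mathcal A}$ is the right adjoint of the truncation $K\mapsto K_{\le1}$ to presheaves on the full subcategory on $[0],[1]$. $\mathcal A$ is shell-complete if for every $p\ge2$ the canonical map $\mathcal A[p]\to\mathrm{cosk}_1^{\mathcal A}(\mathcal A[p]_{\le1})$ is an isomorphism. *)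

theory Defs
  imports "HOL-Library.FuncSet"
begin

(* The cube [n] = {0,1}^n, points encoded as boolean lists of length n
   (False = 0, True = 1); [0] = {[]} is the one-point poset. *)
definition cube :: "nat \<Rightarrow> bool list set" where
  "cube n = {x. length x = n}"

definition cube_le :: "bool list \<Rightarrow> bool list \<Rightarrow> bool" where
  "cube_le x y \<longleftrightarrow> length x = length y \<and> (\<forall>i<length x. x ! i \<le> y ! i)"

definition cube_less :: "bool list \<Rightarrow> bool list \<Rightarrow> bool" where
  "cube_less x y \<longleftrightarrow> cube_le x y \<and> x \<noteq> y"

definition hamming :: "bool list \<Rightarrow> bool list \<Rightarrow> nat" where
  "hamming x y = card {i. i < length x \<and> x ! i \<noteq> y ! i}"

(* A morphism [m] -> [n] is represented by an extensional function on cube m *)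
type_synonym cmor = "bool list \<Rightarrow> bool list"

(* strictly increasing maps [m] -> [n] (the morphisms of PoSet) *)
definition strict_incr :: "nat \<Rightarrow> nat \<Rightarrow> cmor \<Rightarrow> bool" where
  "strict_incr m n f \<longleftrightarrow> f \<in> cube m \<rightarrow>\<^sub>E cube n \<and>
     (\<forall>x\<in>cube m. \<forall>y\<in>cube m. cube_less x y \<longrightarrow> cube_less (f x) (f y))"

definition adj_preserving :: "nat \<Rightarrow> nat \<Rightarrow> cmor \<Rightarrow> bool" where
  "adj_preserving m n f \<longleftrightarrow> strict_incr m n f \<and>
     (\<forall>x\<in>cube m. \<forall>y\<in>cube m. hamming x y = 1 \<longrightarrow> hamming (f x) (f y) = 1)"

definition cid :: "nat \<Rightarrow> cmor" where
  "cid n = restrict id (cube n)"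

definition ccomp :: "nat \<Rightarrow> cmor \<Rightarrow> cmor \<Rightarrow> cmor" where
  "ccomp l g f = compose (cube l) g f"

(* face map delta_i^alpha : [n] -> [n+1], inserting alpha at position i (0-based, i \<le> n) *)
definition face :: "nat \<Rightarrow> nat \<Rightarrow> bool \<Rightarrow> cmor" where
  "face n i \<alpha> = restrict (\<lambda>x. take i x @ \<alpha> # drop i x) (cube n)"

inductive box_mor :: "nat \<Rightarrow> nat \<Rightarrow> cmor \<Rightarrow> bool" where
  box_id: "box_mor n n (cid n)"
| box_face: "i \<le> n \<Longrightarrow> box_mor n (Suc n) (face n i \<alpha>)"
| box_comp: "box_mor l m f \<Longrightarrow> box_mor m n g \<Longrightarrow> box_mor l n (ccomp l g f)"

(* A category of cubes is given by its hom-sets A m n \<subseteq> PoSet([m],[n]) *)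
definition cat_of_cubes :: "(nat \<Rightarrow> nat \<Rightarrow> cmor set) \<Rightarrow> bool" where
  "cat_of_cubes A \<longleftrightarrow>
     (\<forall>m n. \<forall>f\<in>A m n. strict_incr m n f \<and> adj_preserving m n f) \<and>
     (\<forall>n. cid n \<in> A n n) \<and>
     (\<forall>l m n. \<forall>f\<in>A l m. \<forall>g\<in>A m n. ccomp l g f \<in> A l n) \<and>
     (\<forall>m n f. box_mor m n f \<longrightarrow> f \<in> A m n)"

(* Morphisms A[n]_{\<le>1} -> A[p]_{\<le>1} of presheaves on the full subcategory of A
   on [0],[1]: families (phi_0, phi_1), phi_k : A(k,n) -> A(k,p), natural in all
   morphisms u \<in> A(i,j), i,j \<le> 1.  (cosk_1(X)_n = Hom(A[n]_{\<le>1}, X).) *)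
definition trunc_nat :: "(nat \<Rightarrow> nat \<Rightarrow> cmor set) \<Rightarrow> nat \<Rightarrow> nat \<Rightarrow> (nat \<Rightarrow> cmor \<Rightarrow> cmor) \<Rightarrow> bool" where
  "trunc_nat A n p \<phi> \<longleftrightarrow>
     \<phi> \<in> extensional {0, 1} \<and>
     (\<forall>k\<le>1. \<phi> k \<in> A k n \<rightarrow>\<^sub>E A k p) \<and>
     (\<forall>i\<le>1. \<forall>j\<le>1. \<forall>u\<in>A i j. \<forall>x\<in>A j n.
        \<phi> i (ccomp i x u) = ccomp i (\<phi> j x) u)"

(* level n of the canonical (unit) map A[p] -> cosk_1(A[p]_{\<le>1}):
   f \<mapsto> the restriction of the Yoneda map f \<circ> - to levels 0,1 *)
definition cosk_unit :: "(nat \<Rightarrow> nat \<Rightarrow> cmor set) \<Rightarrow> nat \<Rightarrow> cmor \<Rightarrow> (nat \<Rightarrow> cmor \<Rightarrow> cmor)" where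
  "cosk_unit A n f = restrict (\<lambda>k. restrict (\<lambda>x. ccomp k f x) (A k n)) {0, 1}"

definition shell_complete :: "(nat \<Rightarrow> nat \<Rightarrow> cmor set) \<Rightarrow> bool" where
  "shell_complete A \<longleftrightarrow>
     (\<forall>p\<ge>2. \<forall>n. bij_betw (cosk_unit A n) (A n p) {\<phi>. trunc_nat A n p \<phi>})"

end

theory Submission
  imports Defs
begin


lemma cube0: "cube 0 = {[]}" by (auto simp: cube_def)
lemma cube1: "cube 1 = {[False],[True]}"
proof
  show "cube 1 \<subseteq> {[False],[True]}"
  proof
    fix x assume "x \<in> cube 1"
    then obtain b where "x = [b]" by (auto simp: cube_def length_Suc_conv)
    then show "x \<in> {[False],[True]}" by (cases b) auto
  qed
qed (auto simp: cube_def)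

lemma cube_le_la: "cube_le x y \<longleftrightarrow> list_all2 (\<le>) x y"
  by (auto simp: cube_le_def list_all2_conv_all_nth)

lemma cube_le_trans: "cube_le x y \<Longrightarrow> cube_le y z \<Longrightarrow> cube_le x z"
  unfolding cube_le_def by (metis order_trans)

lemma cube_le_refl: "cube_le x x" by (simp add: cube_le_la list_all2_refl)

lemma cube_le_antisym: "cube_le x y \<Longrightarrow> cube_le y x \<Longrightarrow> x = y"
  by (auto simp: cube_le_def intro!: nth_equalityI)

lemma cube_less_trans: "cube_less x y \<Longrightarrow> cube_less y z \<Longrightarrow> cube_less x z"
  unfolding cube_less_def using cube_le_trans cube_le_antisym by blast

lemma cube_less_le_trans: "cube_less x y \<Longrightarrow> cube_le y z \<Longrightarrow> cube_less x z"
  unfolding cube_less_def using cube_le_trans cube_le_antisym by blast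

lemma hamming_zip: "length x = length y \<Longrightarrow>
  hamming x y = length (filter (\<lambda>(a,b). a \<noteq> b) (zip x y))"
  unfolding hamming_def length_filter_conv_card by (auto intro!: arg_cong[where f=card] simp: nth_zip)

lemma hamming_sym: "length x = length y \<Longrightarrow> hamming x y = hamming y x"
  unfolding hamming_def by (metis (no_types, lifting) Collect_cong)

lemma ham1_iff: "length x = length y \<Longrightarrow> hamming x y = 1 \<longleftrightarrow>
   (\<exists>i<length x. x!i \<noteq> y!i \<and> (\<forall>j<length x. j \<noteq> i \<longrightarrow> x!j = y!j))"
proof -
  let ?D = "{i. i < length x \<and> x!i \<noteq> y!i}"
  have "hamming x y = 1 \<longleftrightarrow> (\<exists>i. ?D = {i})" unfolding hamming_def One_nat_def by (rule card_1_singleton_iff)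
  also have "\<dots> \<longleftrightarrow> (\<exists>i<length x. x!i \<noteq> y!i \<and> (\<forall>j<length x. j \<noteq> i \<longrightarrow> x!j = y!j))"
  proof
    assume "\<exists>i. ?D = {i}"
    then obtain i where i: "?D = {i}" by blast
    then have "i \<in> ?D" by blast
    moreover have "\<forall>j<length x. j \<noteq> i \<longrightarrow> x!j = y!j" using i by blast
    ultimately show "\<exists>i<length x. x!i \<noteq> y!i \<and> (\<forall>j<length x. j \<noteq> i \<longrightarrow> x!j = y!j)" by blast
  next
    assume "\<exists>i<length x. x!i \<noteq> y!i \<and> (\<forall>j<length x. j \<noteq> i \<longrightarrow> x!j = y!j)"
    then obtain i where "i<length x" "x!i \<noteq> y!i" "\<forall>j<length x. j \<noteq> i \<longrightarrow> x!j = y!j" by blast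
    then have "?D = {i}" by blast
    then show "\<exists>i. ?D = {i}" by blast
  qed
  finally show ?thesis .
qed

definition ins :: "nat \<Rightarrow> bool \<Rightarrow> bool list \<Rightarrow> bool list" where
  "ins i a x = take i x @ a # drop i x"

lemma ins_len: "length (ins i a x) = Suc (length x)" by (simp add: ins_def)

lemma ins_le: "cube_le x y \<Longrightarrow> cube_le (ins i a x) (ins i a y)"
  unfolding cube_le_la ins_def
  by (intro list_all2_appendI list_all2_takeI list_all2_dropI list_all2_Cons[THEN iffD2]) auto

lemma ins_inj: "length x = length y \<Longrightarrow> ins i a x = ins i a y \<Longrightarrow> x = y"
  unfolding ins_def
  by (metis append_eq_append_conv append_take_drop_id length_take list.inject)

lemma ins_ham: "length x = length y \<Longrightarrow> hamming (ins i a x) (ins i a y) = hamming x y"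
proof -
  assume l: "length x = length y"
  define P where "P = (\<lambda>(a::bool,b::bool). a \<noteq> b)"
  have z: "zip x y = zip (take i x) (take i y) @ zip (drop i x) (drop i y)"
    using l by (metis append_take_drop_id length_take zip_append)
  have z2: "zip (ins i a x) (ins i a y) = zip (take i x) (take i y) @ (a,a) # zip (drop i x) (drop i y)"
    unfolding ins_def using l by (subst zip_append) auto
  have "hamming (ins i a x) (ins i a y) = length (filter P (zip (ins i a x) (ins i a y)))"
    unfolding P_def using l by (intro hamming_zip) (simp add: ins_len)
  also have "\<dots> = length (filter P (zip x y))" unfolding z z2 by (simp add: P_def)
  also have "\<dots> = hamming x y" unfolding P_def using l by (simp add: hamming_zip)
  finally show ?thesis .
qed


definition AP :: "nat \<Rightarrow> nat \<Rightarrow> cmor set" where "AP m n = {f. adj_preserving m n f}"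

lemma cid_ap: "adj_preserving n n (cid n)"
  by (auto simp: adj_preserving_def strict_incr_def cid_def)

lemma ap_fun: "adj_preserving m n f \<Longrightarrow> x \<in> cube m \<Longrightarrow> f x \<in> cube n"
  by (auto simp: adj_preserving_def strict_incr_def)

lemma comp_ap: "adj_preserving l m f \<Longrightarrow> adj_preserving m n g \<Longrightarrow> adj_preserving l n (ccomp l g f)"
  unfolding ccomp_def adj_preserving_def strict_incr_def compose_def
  by (auto simp: PiE_iff)

lemma face_eq: "face n i a = restrict (ins i a) (cube n)"
  unfolding face_def ins_def ..

lemma face_ap: "adj_preserving n (Suc n) (face n i a)"
  unfolding face_eq adj_preserving_def strict_incr_def
proof (intro conjI ballI impI)
  show "restrict (ins i a) (cube n) \<in> cube n \<rightarrow>\<^sub>E cube (Suc n)"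
    by (auto simp: cube_def ins_len)
next
  fix x y assume x: "x \<in> cube n" and y: "y \<in> cube n" and "cube_less x y"
  then show "cube_less (restrict (ins i a) (cube n) x) (restrict (ins i a) (cube n) y)"
    using ins_le ins_inj by (auto simp: cube_less_def cube_def)
next
  fix x y assume x: "x \<in> cube n" and y: "y \<in> cube n" and "hamming x y = 1"
  then show "hamming (restrict (ins i a) (cube n) x) (restrict (ins i a) (cube n) y) = 1"
    using ins_ham by (auto simp: cube_def)
qed

lemma box_ap: "box_mor m n f \<Longrightarrow> adj_preserving m n f"
  by (induction rule: box_mor.induct) (auto intro: cid_ap face_ap comp_ap)

lemma cat_AP: "cat_of_cubes AP"
proof -
  have "\<forall>m n. \<forall>f\<in>AP m n. strict_incr m n f \<and> adj_preserving m n f"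
    by (simp add: AP_def adj_preserving_def)
  moreover have "\<forall>n. cid n \<in> AP n n" by (simp add: AP_def cid_ap)
  moreover have "\<forall>l m n. \<forall>f\<in>AP l m. \<forall>g\<in>AP m n. ccomp l g f \<in> AP l n"
    by (simp add: AP_def comp_ap)
  moreover have "\<forall>m n f. box_mor m n f \<longrightarrow> f \<in> AP m n" by (simp add: AP_def box_ap)
  ultimately show ?thesis unfolding cat_of_cubes_def by blast
qed


definition pt :: "bool list \<Rightarrow> cmor" where "pt v = restrict (\<lambda>_. v) (cube 0)"
definition edge :: "bool list \<Rightarrow> bool list \<Rightarrow> cmor" where
  "edge x y = restrict (\<lambda>b. if hd b then y else x) (cube 1)"

lemma cube1': "cube (Suc 0) = {[False],[True]}" using cube1 by simp

lemma FT_less: "cube_less [False] [True]" by (simp add: cube_less_def cube_le_def)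
lemma ham_FT: "hamming [False] [True] = 1" "hamming [True] [False] = 1"
  by (simp_all add: hamming_zip)

lemma ham_self: "hamming x x = 0" by (simp add: hamming_def)
lemma TF_not_le: "\<not> cube_le [True] [False]" by (simp add: cube_le_def)

lemma ap0: "adj_preserving 0 n f \<Longrightarrow> f = pt (f []) \<and> f [] \<in> cube n"
  unfolding adj_preserving_def strict_incr_def pt_def
  by (auto simp: cube0 PiE_iff extensional_def)

lemma pt_ap: "v \<in> cube n \<Longrightarrow> adj_preserving 0 n (pt v)"
  unfolding adj_preserving_def strict_incr_def pt_def
  by (auto simp: cube0 cube_less_def hamming_def)

lemma ap1: "adj_preserving 1 n f \<Longrightarrow> f = edge (f [False]) (f [True]) \<and>
   cube_less (f [False]) (f [True]) \<and> hamming (f [False]) (f [True]) = 1 \<and>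
   f [False] \<in> cube n \<and> f [True] \<in> cube n"
proof -
  assume f: "adj_preserving 1 n f"
  have c: "[False] \<in> cube 1" "[True] \<in> cube 1" by (auto simp: cube1')
  have "f = edge (f [False]) (f [True])"
  proof
    fix b
    have e: "f \<in> extensional (cube 1)" using f unfolding adj_preserving_def strict_incr_def
      by (simp add: PiE_iff)
    show "f b = edge (f [False]) (f [True]) b"
    proof (cases "b \<in> cube 1")
      case True
      then have "b = [False] \<or> b = [True]" by (simp add: cube1')
      then show ?thesis using True by (auto simp: edge_def)
    next
      case False
      then show ?thesis using e by (simp add: edge_def extensional_def)
    qed
  qed
  then show ?thesis using f c FT_less ham_FT
    unfolding adj_preserving_def strict_incr_def by auto
qed

lemma edge_ap: "x \<in> cube n \<Longrightarrow> y \<in> cube n \<Longrightarrow> cube_less x y \<Longrightarrow> hamming x y = 1 \<Longrightarrow>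
  adj_preserving 1 n (edge x y)"
  unfolding adj_preserving_def strict_incr_def edge_def One_nat_def cube1'
  using hamming_sym[of x y] FT_less ham_FT
  by (auto simp: cube_less_def cube_def ham_self TF_not_le)

lemma pt_box: "box_mor 0 (length v) (pt v)"
proof (induction v)
  case Nil
  have "pt [] = cid 0" by (auto simp: pt_def cid_def cube0)
  then show ?case using box_mor.box_id[of 0] by simp
next
  case (Cons b v)
  have "pt (b # v) = ccomp 0 (face (length v) 0 b) (pt v)"
    by (auto simp: pt_def ccomp_def face_def cube0 compose_def cube_def)
  then show ?case using box_mor.box_comp[OF Cons.IH box_mor.box_face[of 0 "length v" b]] by simp
qed

lemma edge_box_c: "box_mor 1 (Suc (length c)) (edge (False # c) (True # c))"
proof (induction c)
  case Nil
  have "edge [False] [True] = cid 1" by (auto simp: edge_def cid_def cube1')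
  then show ?case using box_mor.box_id[of 1] by simp
next
  case (Cons b c)
  have "edge (False # b # c) (True # b # c) = ccomp 1 (face (Suc (length c)) 1 b) (edge (False # c) (True # c))"
    by (auto simp: edge_def ccomp_def face_def cube1' compose_def cube_def)
  then show ?case using box_mor.box_comp[OF Cons.IH box_mor.box_face[of 1 "Suc (length c)" b]] by simp
qed

lemma edge_box_ac: "box_mor 1 (length a + Suc (length c)) (edge (a @ False # c) (a @ True # c))"
proof (induction a)
  case Nil
  then show ?case using edge_box_c by simp
next
  case (Cons b a)
  have "edge ((b # a) @ False # c) ((b # a) @ True # c) =
     ccomp 1 (face (length a + Suc (length c)) 0 b) (edge (a @ False # c) (a @ True # c))"
    by (auto simp: edge_def ccomp_def face_def cube1' compose_def cube_def)
  then show ?case using box_mor.box_comp[OF Cons.IH box_mor.box_face[of 0 "length a + Suc (length c)" b]] by simp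
qed

lemma edge_box: assumes "x \<in> cube n" "y \<in> cube n" "cube_le x y" "hamming x y = 1"
  shows "box_mor 1 n (edge x y)"
proof -
  have l: "length x = n" "length y = n" using assms by (auto simp: cube_def)
  obtain i where i: "i < n" "x!i \<noteq> y!i" and o: "\<forall>j<n. j \<noteq> i \<longrightarrow> x!j = y!j"
    using assms(4) ham1_iff[of x y] l by auto
  have xi: "x!i = False" "y!i = True" using assms(3) i l unfolding cube_le_def by auto
  have tk: "take i y = take i x" using o l i by (intro nth_equalityI) auto
  have dr: "drop (Suc i) y = drop (Suc i) x" using o l i by (intro nth_equalityI) auto
  have x: "x = take i x @ False # drop (Suc i) x" using id_take_nth_drop[of i x] i l xi by simp
  have y: "y = take i x @ True # drop (Suc i) x" using id_take_nth_drop[of i y] i l xi tk dr by simp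
  have n: "n = length (take i x) + Suc (length (drop (Suc i) x))" using i l by simp
  show ?thesis using edge_box_ac[of "take i x" "drop (Suc i) x"] x y n by metis
qed

lemma AP01: assumes B: "cat_of_cubes B" and k: "k \<le> 1" shows "B k n = AP k n"
proof
  show "B k n \<subseteq> AP k n" using B unfolding cat_of_cubes_def AP_def by blast
next
  have box: "\<And>f. box_mor k n f \<Longrightarrow> f \<in> B k n" using B unfolding cat_of_cubes_def by blast
  show "AP k n \<subseteq> B k n"
  proof
    fix f assume "f \<in> AP k n"
    then have f: "adj_preserving k n f" by (simp add: AP_def)
    show "f \<in> B k n"
    proof (cases "k = 0")
      case True
      then have "f = pt (f [])" "f [] \<in> cube n" using ap0 f by auto
      then show ?thesis using pt_box[of "f []"] box True by (simp add: cube_def)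
    next
      case False
      then have k1: "k = 1" using k by simp
      then show ?thesis using ap1[OF f[unfolded k1]] edge_box box[unfolded k1] k1
        by (metis cube_less_def)
    qed
  qed
qed

lemma small_target: assumes f: "adj_preserving n p f" and p: "p \<le> 1" shows "n \<le> 1"
proof (rule ccontr)
  assume "\<not> n \<le> 1"
  define m where "m = n - 2"
  have n: "n = Suc (Suc m)" using \<open>\<not> n \<le> 1\<close> unfolding m_def by simp
  define r where "r = replicate m False"
  define x0 where "x0 = False # False # r"
  define x1 where "x1 = True # False # r"
  define x2 where "x2 = True # True # r"
  have c: "x0 \<in> cube n" "x1 \<in> cube n" "x2 \<in> cube n" by (auto simp: cube_def n x0_def x1_def x2_def r_def)
  have l: "cube_less x0 x1" "cube_less x1 x2"
    unfolding cube_less_def cube_le_la x0_def x1_def x2_def by (auto intro: list_all2_refl)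
  have s: "cube_less (f x0) (f x1)" "cube_less (f x1) (f x2)" "f x0 \<in> cube p" "f x1 \<in> cube p" "f x2 \<in> cube p"
    using f c l unfolding adj_preserving_def strict_incr_def by blast+
  have s2: "cube_less (f x0) (f x2)" using s cube_less_trans by blast
  show False
  proof (cases p)
    case 0
    then show False using s(1,3,4) by (simp add: cube0 cube_less_def)
  next
    case (Suc q)
    then have "p = Suc 0" using p by simp
    then have "f x0 \<in> {[False],[True]}" "f x1 \<in> {[False],[True]}" "f x2 \<in> {[False],[True]}"
      using s cube1' by auto
    then show False using s(1,2) s2 TF_not_le by (auto simp: cube_less_def)
  qed
qed


lemma ap_ext: "adj_preserving m n f \<Longrightarrow> x \<notin> cube m \<Longrightarrow> f x = undefined"
  by (auto simp: adj_preserving_def strict_incr_def PiE_iff extensional_def)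

lemma ccomp_in: "x \<in> cube k \<Longrightarrow> ccomp k g f x = g (f x)"
  by (simp add: ccomp_def compose_def)
lemma ccomp_out: "x \<notin> cube k \<Longrightarrow> ccomp k g f x = undefined"
  by (simp add: ccomp_def compose_def)

lemma mono_edges:
  assumes F: "f \<in> cube n \<rightarrow>\<^sub>E cube p"
    and E: "\<And>x z. x \<in> cube n \<Longrightarrow> z \<in> cube n \<Longrightarrow> cube_le x z \<Longrightarrow> hamming x z = 1 \<Longrightarrow>
        cube_less (f x) (f z) \<and> hamming (f x) (f z) = 1"
  shows "\<And>x y. x \<in> cube n \<Longrightarrow> y \<in> cube n \<Longrightarrow> cube_le x y \<Longrightarrow>
      card {i. i < length x \<and> x!i \<noteq> y!i} = d \<Longrightarrow> cube_le (f x) (f y)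
        \<and> (d > 0 \<longrightarrow> cube_less (f x) (f y))"
proof (induction d)
  case 0
  have "x = y" using 0 by (auto simp: cube_def cube_le_def intro!: nth_equalityI)
  then show ?case by (simp add: cube_le_refl)
next
  case (Suc d x y)
  let ?D = "{i. i < length x \<and> x!i \<noteq> y!i}"
  have lx: "length x = n" "length y = n" using Suc.prems by (auto simp: cube_def)
  have "?D \<noteq> {}" using Suc.prems(4) by (metis card.empty nat.distinct(1))
  then obtain i where i: "i < n" "x!i \<noteq> y!i" using lx by auto
  have xi: "x!i = False" "y!i = True" using Suc.prems(3) i lx unfolding cube_le_def by auto
  define z where "z = x[i := True]"
  have zc: "z \<in> cube n" using lx by (simp add: z_def cube_def)
  have xz: "cube_le x z" using lx i unfolding z_def cube_le_def by (simp add: nth_list_update)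
  have hxz: "hamming x z = 1" using lx i xi
    by (subst ham1_iff) (auto simp: z_def nth_list_update intro!: exI[of _ i])
  have zy: "cube_le z y" using Suc.prems(3) lx xi i by (auto simp: z_def cube_le_def nth_list_update)
  have Dz: "{j. j < length z \<and> z!j \<noteq> y!j} = ?D - {i}" using lx xi i
    by (auto simp: z_def nth_list_update)
  have "card {j. j < length z \<and> z!j \<noteq> y!j} = d" unfolding Dz
    using Suc.prems(4) i lx by (simp add: card_Diff_singleton)
  then have "cube_le (f z) (f y)" using Suc.IH[OF zc Suc.prems(2) zy] by blast
  moreover have "cube_less (f x) (f z)" using E[OF Suc.prems(1) zc xz hxz] by blast
  ultimately have "cube_less (f x) (f y)" using cube_less_le_trans by blast
  then show ?case by (simp add: cube_less_def)
qed

lemma edge_adj: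
  assumes F: "f \<in> cube n \<rightarrow>\<^sub>E cube p"
    and E: "\<And>x z. x \<in> cube n \<Longrightarrow> z \<in> cube n \<Longrightarrow> cube_le x z \<Longrightarrow> hamming x z = 1 \<Longrightarrow>
        cube_less (f x) (f z) \<and> hamming (f x) (f z) = 1"
  shows "adj_preserving n p f"
  unfolding adj_preserving_def strict_incr_def
proof (intro conjI ballI impI F)
  fix x y assume x: "x \<in> cube n" and y: "y \<in> cube n" and l: "cube_less x y"
  let ?d = "card {i. i < length x \<and> x!i \<noteq> y!i}"
  have "x \<noteq> y" "cube_le x y" using l by (auto simp: cube_less_def)
  then have "?d > 0" using x y
    by (auto simp: cube_def card_gt_0_iff intro: nth_equalityI)
  then show "cube_less (f x) (f y)" using mono_edges[OF F E x y \<open>cube_le x y\<close> refl] by blast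
next
  fix x y assume x: "x \<in> cube n" and y: "y \<in> cube n" and h: "hamming x y = 1"
  have lx: "length x = n" "length y = n" using x y by (auto simp: cube_def)
  have fl: "length (f x) = p" "length (f y) = p" using F x y by (auto simp: cube_def PiE_iff)
  obtain i where i: "i < n" "x!i \<noteq> y!i" and o: "\<forall>j<n. j \<noteq> i \<longrightarrow> x!j = y!j"
    using h ham1_iff[of x y] lx by auto
  show "hamming (f x) (f y) = 1"
  proof (cases "x!i")
    case False
    then have "cube_le x y" using o i lx by (auto simp: cube_le_def)
    then show ?thesis using E[OF x y _ h] by blast
  next
    case True
    then have "cube_le y x" using o i lx by (auto simp: cube_le_def)
    moreover have "hamming y x = 1" using h hamming_sym lx by metis
    ultimately show ?thesis using E[OF y x] hamming_sym fl by metis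
  qed
qed


lemma AP_ext: "f \<in> AP m n \<Longrightarrow> x \<notin> cube m \<Longrightarrow> f x = undefined"
  by (simp add: AP_def ap_ext)

lemma ccomp_pt: "adj_preserving 1 n e \<Longrightarrow> b \<in> cube 1 \<Longrightarrow> ccomp 0 e (pt b) = pt (e b)"
  by (auto simp: ccomp_def compose_def pt_def cube0)

lemma pt_app: "pt v [] = v" by (simp add: pt_def cube0)

lemma cosk_inj: "inj_on (cosk_unit AP n) (AP n p)"
proof (rule inj_onI)
  fix f g assume f: "f \<in> AP n p" and g: "g \<in> AP n p" and e: "cosk_unit AP n f = cosk_unit AP n g"
  show "f = g"
  proof
    fix x show "f x = g x"
    proof (cases "x \<in> cube n")
      case True
      then have "pt x \<in> AP 0 n" by (simp add: AP_def pt_ap)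
      then have "ccomp 0 f (pt x) = ccomp 0 g (pt x)"
        using fun_cong[OF fun_cong[OF e, of 0], of "pt x"] by (simp add: cosk_unit_def)
      then have "ccomp 0 f (pt x) [] = ccomp 0 g (pt x) []" by simp
      then show ?thesis by (simp add: ccomp_in cube0 pt_app)
    next
      case False
      then show ?thesis using AP_ext[OF f False] AP_ext[OF g False] by simp
    qed
  qed
qed

lemma cosk_trunc: assumes f: "f \<in> AP n p" shows "trunc_nat AP n p (cosk_unit AP n f)"
  unfolding trunc_nat_def
proof (intro conjI allI impI ballI)
  show "cosk_unit AP n f \<in> extensional {0, 1}" by (simp add: cosk_unit_def)
next
  fix k :: nat assume k: "k \<le> 1"
  then have "k \<in> {0,1}" by auto
  then show "cosk_unit AP n f k \<in> AP k n \<rightarrow>\<^sub>E AP k p"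
    using f by (auto simp: cosk_unit_def AP_def comp_ap)
next
  fix i j :: nat and u x assume i: "i \<le> 1" and j: "j \<le> 1" and u: "u \<in> AP i j" and x: "x \<in> AP j n"
  have ij: "i \<in> {0,1}" "j \<in> {0,1}" using i j by auto
  have xu: "ccomp i x u \<in> AP i n" using u x by (simp add: AP_def comp_ap)
  have uf: "u \<in> cube i \<rightarrow> cube j" using u by (auto simp: AP_def ap_fun)
  have "ccomp i f (ccomp i x u) = ccomp i (ccomp j f x) u"
    unfolding ccomp_def by (rule compose_assoc[OF uf])
  then show "cosk_unit AP n f i (ccomp i x u) = ccomp i (cosk_unit AP n f j x) u"
    using ij xu x by (simp add: cosk_unit_def)
qed

lemma cosk_surj: assumes T: "trunc_nat AP n p \<phi>" shows "\<phi> \<in> cosk_unit AP n ` AP n p"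
proof -
  have ext: "\<phi> \<in> extensional {0,1}" and P: "\<And>k. k \<le> 1 \<Longrightarrow> \<phi> k \<in> AP k n \<rightarrow>\<^sub>E AP k p"
    and N: "\<And>i j u x. i \<le> 1 \<Longrightarrow> j \<le> 1 \<Longrightarrow> u \<in> AP i j \<Longrightarrow> x \<in> AP j n \<Longrightarrow>
        \<phi> i (ccomp i x u) = ccomp i (\<phi> j x) u"
    using T unfolding trunc_nat_def by auto
  define f where "f = restrict (\<lambda>x. \<phi> 0 (pt x) []) (cube n)"
  have P0: "\<And>v. v \<in> AP 0 n \<Longrightarrow> \<phi> 0 v \<in> AP 0 p" using P[of 0] by auto
  have P1: "\<And>v. v \<in> AP 1 n \<Longrightarrow> \<phi> 1 v \<in> AP 1 p" using P[of 1] by auto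
  have fF: "f \<in> cube n \<rightarrow>\<^sub>E cube p"
  proof
    fix x assume x: "x \<in> cube n"
    then have "\<phi> 0 (pt x) \<in> AP 0 p" using P0 by (simp add: AP_def pt_ap)
    then show "f x \<in> cube p" using x by (auto simp: f_def AP_def dest: ap0)
  qed (simp add: f_def)
  have K: "\<And>e b. e \<in> AP 1 n \<Longrightarrow> b \<in> cube 1 \<Longrightarrow> f (e b) = \<phi> 1 e b"
  proof -
    fix e b assume e: "e \<in> AP 1 n" and b: "b \<in> cube 1"
    have ea: "adj_preserving 1 n e" using e by (simp add: AP_def)
    have u: "pt b \<in> AP 0 1" using b by (simp add: AP_def pt_ap)
    have "\<phi> 0 (ccomp 0 e (pt b)) = ccomp 0 (\<phi> 1 e) (pt b)" using N[of 0 1 "pt b" e] u e by simp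
    then have "\<phi> 0 (pt (e b)) [] = ccomp 0 (\<phi> 1 e) (pt b) []" using ccomp_pt[OF ea b] by simp
    also have "\<dots> = \<phi> 1 e b" by (simp add: ccomp_in cube0 pt_app)
    finally show "f (e b) = \<phi> 1 e b" using ap_fun[OF ea b] by (simp add: f_def)
  qed
  have fa: "adj_preserving n p f"
  proof (rule edge_adj[OF fF])
    fix x z assume x: "x \<in> cube n" and z: "z \<in> cube n" and le: "cube_le x z" and h: "hamming x z = 1"
    have "x \<noteq> z" using h ham_self by auto
    then have "cube_less x z" using le by (simp add: cube_less_def)
    then have e: "edge x z \<in> AP 1 n" using edge_ap x z h by (simp add: AP_def)
    have c: "[False] \<in> cube 1" "[True] \<in> cube 1" by (auto simp: cube1')
    have "f x = \<phi> 1 (edge x z) [False]" "f z = \<phi> 1 (edge x z) [True]"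
      using K[OF e c(1)] K[OF e c(2)] c by (simp_all add: edge_def)
    moreover have "adj_preserving 1 p (\<phi> 1 (edge x z))" using P1[OF e] by (simp add: AP_def)
    ultimately show "cube_less (f x) (f z) \<and> hamming (f x) (f z) = 1" using ap1 by metis
  qed
  have "cosk_unit AP n f = \<phi>"
  proof
    fix k show "cosk_unit AP n f k = \<phi> k"
    proof (cases "k \<in> {0,1}")
      case False
      then show ?thesis using ext by (simp add: cosk_unit_def extensional_def)
    next
      case True
      then have k: "k = 0 \<or> k = 1" by auto
      show ?thesis
      proof
        fix v show "cosk_unit AP n f k v = \<phi> k v"
        proof (cases "v \<in> AP k n")
          case False
          then show ?thesis using P[of k] k True by (auto simp: cosk_unit_def PiE_iff extensional_def)
        next
          case vin: True
          have lhs: "cosk_unit AP n f k v = ccomp k f v" using True vin by (simp add: cosk_unit_def)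
          have pk: "\<phi> k v \<in> AP k p" using P[of k] k vin by auto
          show ?thesis unfolding lhs
          proof
            fix b show "ccomp k f v b = \<phi> k v b"
            proof (cases "b \<in> cube k")
              case False
              then show ?thesis using AP_ext[OF pk False] by (simp add: ccomp_out)
            next
              case bin: True
              show ?thesis using k
              proof
                assume k0: "k = 0"
                then have va: "adj_preserving 0 n v" using vin by (simp add: AP_def)
                then have "v = pt (v [])" "v [] \<in> cube n" using ap0 by auto
                moreover have "b = []" using bin k0 by (simp add: cube0)
                ultimately show ?thesis using k0 by (simp add: ccomp_in cube0 f_def)
              next
                assume k1: "k = 1"
                then show ?thesis using K[of v b] vin bin by (simp add: ccomp_in)
              qed
            qed
          qed
        qed
      qed
    qed
  qed
  then show ?thesis using fa by (auto simp: AP_def)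
qed

lemma sc_AP: "shell_complete AP"
  unfolding shell_complete_def
proof (intro allI impI)
  fix p n :: nat
  show "bij_betw (cosk_unit AP n) (AP n p) {\<phi>. trunc_nat AP n p \<phi>}"
    unfolding bij_betw_def using cosk_inj cosk_trunc cosk_surj by blast
qed


lemma trunc_same: assumes B: "cat_of_cubes B" shows "trunc_nat B n p = trunc_nat AP n p"
proof
  fix \<phi>
  have e: "\<And>k m. k \<le> 1 \<Longrightarrow> B k m = AP k m" using AP01[OF B] by blast
  show "trunc_nat B n p \<phi> = trunc_nat AP n p \<phi>"
    unfolding trunc_nat_def by (simp add: e)
qed

lemma cosk_same: assumes B: "cat_of_cubes B" shows "cosk_unit B n = cosk_unit AP n"
proof
  fix f
  have e: "\<And>k m. k \<le> 1 \<Longrightarrow> B k m = AP k m" using AP01[OF B] by blast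
  show "cosk_unit B n f = cosk_unit AP n f"
  proof
    fix k show "cosk_unit B n f k = cosk_unit AP n f k"
    proof (cases "k \<in> {0::nat, 1}")
      case True
      then have "k \<le> 1" by auto
      then show ?thesis using True e[of k n] by (simp add: cosk_unit_def)
    qed (simp add: cosk_unit_def)
  qed
qed

theorem theorem7p8:
  shows "\<exists>A. cat_of_cubes A \<and> shell_complete A \<and>
           (\<forall>B. cat_of_cubes B \<and> shell_complete B \<longrightarrow> (\<forall>m n. A m n \<subseteq> B m n))"
proof (intro exI[of _ AP] conjI cat_AP sc_AP allI impI)
  fix B m n assume Bh: "cat_of_cubes B \<and> shell_complete B"
  then have B: "cat_of_cubes B" and S: "shell_complete B" by auto
  show "AP m n \<subseteq> B m n"
  proof (cases "m \<le> 1")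
    case True
    then show ?thesis using AP01[OF B True] by simp
  next
    case m: False
    show ?thesis
    proof (cases "n \<le> 1")
      case True
      then show ?thesis using small_target m by (auto simp: AP_def)
    next
      case False
      then have "n \<ge> 2" by simp
      then have bij: "bij_betw (cosk_unit AP m) (B m n) {\<phi>. trunc_nat AP m n \<phi>}"
        using S unfolding shell_complete_def trunc_same[OF B] cosk_same[OF B] by blast
      have sub: "B m n \<subseteq> AP m n" using B unfolding cat_of_cubes_def AP_def by blast
      show ?thesis
      proof
        fix f assume f: "f \<in> AP m n"
        then have "cosk_unit AP m f \<in> {\<phi>. trunc_nat AP m n \<phi>}" using cosk_trunc by simp
        then obtain g where g: "g \<in> B m n" "cosk_unit AP m g = cosk_unit AP m f"
          using bij unfolding bij_betw_def by (metis imageE)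
        then have "g = f" using cosk_inj[of m n] f sub by (auto dest: inj_onD)
        then show "f \<in> B m n" using g by simp
      qed
    qed
  qed
qed


end
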